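(* Let $T$ be a monoid, $Y$ a semilattice and $\cdot$ a left partially defined action of $T$ on $Y$ satisfying axioms (A), (B), (C), such that $M(T,Y)$ is an ultra $F$-restriction monoid. Let $\circ$ be the reverse right partial action, and for $t\in T$ let $d_t$ and $r_t$ be the greatest elements of $\mathrm{dom}(\varphi_t)$ and $\mathrm{ran}(\varphi_t)$, respectively. For $t\in T$, $y\in Y$ put $t*y=t\cdot(y\wedge d_t)$ and $y\bullet t=(y\wedge r_t)\circ t$. Then: (1) $*$ and $\bullet$ form a double action of $T$ on $Y$ (so $Y*_mT$ can be formed); (2) $Y*_mT$ and $M(T,Y)$ are equal as $(2,1,1,0)$-algebras.
   Context: A left partial action of $T$ on $Y$: partial map $(t,y)\mapsto t\cdot y$, $1\cdot y=y$ always defined, and if $t\cdot y$, $s\cdot(t\cdot y)$ are defined then $(st)\cdot y$ is defined and equals it. With $\varphi_t\colon y\mapsto t\cdot y$: (A) $\mathrm{dom}\varphi_t$, $\mathrm{ran}\varphi_t$ are order ideals of $Y$; (B) $\varphi_t$ is an order-isomorphism $\mathrm{dom}\varphi_t\to\mathrm{ran}\varphi_t$; (C) $\mathrm{dom}\varphi_t\ne\varnothing$. Partially defined action: $(st)\cdot x$ defined iff $t\cdot x$ and $s\cdot(t\cdot x)$ defined. Reverse right partial action: $y\circ t$ defined iff $y\in\mathrm{ran}\varphi_t$, with $y\circ t=\varphi_t^{-1}(y)$. $M(T,Y)=\{(y,t)\colon y\circ t\text{ defined}\}$ with $(x,s)(y,t)=(s\cdot((x\circ s)\wedge y),st)$,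 $(y,t)^*=(y\circ t,1)$, $(y,t)^+=(y,1)$. Restriction semigroups: algebras $(S,\cdot,{}^*,{}^+)$ with $(S,\cdot)$ a semigroup satisfying $xx^*=x$, $x^*y^*=y^*x^*$, $(xy^* )^*=x^*y^*$, $x^*y=y(xy)^*$, $x^+x=x$, $x^+y^+=y^+x^+$, $(x^+y)^+=x^+y^+$, $xy^+=(xy)^+x$, $(x^+)^*=x^+$, $(x^* )^+=x^*$. $P(S)=\{x^*\}$; $\sigma$ the least congruence identifying projections; proper: ($a^*=b^*$, $a\sigma b$) or ($a^+=b^+$, $a\sigma b$) imply $a=b$; $F$-restriction: every $\sigma$-class has a maximum for the order $a\le b\iff a=eb$, $e\in P(S)$. Underlying left partial action of proper $S$: of $S/\sigma$ on $P(S)$, $t\cdot e$ defined iff some $a\in t$ has $a^*\ge e$, value $(ae)^+$. Ultra $F$-restriction monoid: proper $F$-restriction monoid whose underlying left partial action is a partially defined action. Double action of $T$ on a semilattice $Y$ with identity $\epsilon$: a left action $*$ and right action $\bullet$ with $t*(x\wedge y)=t*x\wedge t*y$, $(x\wedge y)\bullet t=x\bullet t\wedge y\bullet t$, $(t*x)\bullet t=\epsilon\bullet t\wedge x$, $t*(x\bullet t)=x\wedge t*\epsilon$. Then $Y*_mT=\{(y,t)\colon y\le t*\epsilon\}$ with $(x,s)(y,t)=(x\wedge s*y,st)$, $(y,t)^*=(y\bullet t,1)$, $(y,t)^+=(y,1)$, identity $(\epsilon,1)$. *)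

theory Defs
  imports Main
begin

definition restriction_semigroup ::
  "'a set \<Rightarrow> ('a \<Rightarrow> 'a \<Rightarrow> 'a) \<Rightarrow> ('a \<Rightarrow> 'a) \<Rightarrow> ('a \<Rightarrow> 'a) \<Rightarrow> bool" where
  "restriction_semigroup S m st pl \<longleftrightarrow>
     (\<forall>x\<in>S. \<forall>y\<in>S. m x y \<in> S) \<and> (\<forall>x\<in>S. st x \<in> S \<and> pl x \<in> S) \<and>
     (\<forall>x\<in>S. \<forall>y\<in>S. \<forall>z\<in>S. m (m x y) z = m x (m y z)) \<and>
     (\<forall>x\<in>S. m x (st x) = x) \<and>
     (\<forall>x\<in>S. \<forall>y\<in>S. m (st x) (st y) = m (st y) (st x)) \<and>
     (\<forall>x\<in>S. \<forall>y\<in>S. st (m x (st y)) = m (st x) (st y)) \<and>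
     (\<forall>x\<in>S. \<forall>y\<in>S. m (st x) y = m y (st (m x y))) \<and>
     (\<forall>x\<in>S. m (pl x) x = x) \<and>
     (\<forall>x\<in>S. \<forall>y\<in>S. m (pl x) (pl y) = m (pl y) (pl x)) \<and>
     (\<forall>x\<in>S. \<forall>y\<in>S. pl (m (pl x) y) = m (pl x) (pl y)) \<and>
     (\<forall>x\<in>S. \<forall>y\<in>S. m x (pl y) = m (pl (m x y)) x) \<and>
     (\<forall>x\<in>S. st (pl x) = pl x) \<and>
     (\<forall>x\<in>S. pl (st x) = st x)"

definition restriction_monoid ::
  "'a set \<Rightarrow> ('a \<Rightarrow> 'a \<Rightarrow> 'a) \<Rightarrow> ('a \<Rightarrow> 'a) \<Rightarrow> ('a \<Rightarrow> 'a) \<Rightarrow> bool" where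
  "restriction_monoid S m st pl \<longleftrightarrow> restriction_semigroup S m st pl \<and>
     (\<exists>u\<in>S. \<forall>x\<in>S. m u x = x \<and> m x u = x)"

definition projections :: "'a set \<Rightarrow> ('a \<Rightarrow> 'a) \<Rightarrow> 'a set" where
  "projections S st = st ` S"

definition nat_le ::
  "'a set \<Rightarrow> ('a \<Rightarrow> 'a \<Rightarrow> 'a) \<Rightarrow> ('a \<Rightarrow> 'a) \<Rightarrow> 'a \<Rightarrow> 'a \<Rightarrow> bool" where
  "nat_le S m st a b \<longleftrightarrow> (\<exists>e\<in>projections S st. a = m e b)"

definition sigma_rel ::
  "'a set \<Rightarrow> ('a \<Rightarrow> 'a \<Rightarrow> 'a) \<Rightarrow> ('a \<Rightarrow> 'a) \<Rightarrow> ('a \<Rightarrow> 'a) \<Rightarrow> ('a \<times> 'a) set" where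
  "sigma_rel S m st pl = \<Inter> {R. equiv S R \<and>
      (\<forall>a b c. (a, b) \<in> R \<and> c \<in> S \<longrightarrow> (m c a, m c b) \<in> R \<and> (m a c, m b c) \<in> R) \<and>
      (\<forall>a b. (a, b) \<in> R \<longrightarrow> (st a, st b) \<in> R \<and> (pl a, pl b) \<in> R) \<and>
      projections S st \<times> projections S st \<subseteq> R}"

definition proper_rs ::
  "'a set \<Rightarrow> ('a \<Rightarrow> 'a \<Rightarrow> 'a) \<Rightarrow> ('a \<Rightarrow> 'a) \<Rightarrow> ('a \<Rightarrow> 'a) \<Rightarrow> bool" where
  "proper_rs S m st pl \<longleftrightarrow>
     (\<forall>a\<in>S. \<forall>b\<in>S. st a = st b \<and> (a, b) \<in> sigma_rel S m st pl \<longrightarrow> a = b) \<and>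
     (\<forall>a\<in>S. \<forall>b\<in>S. pl a = pl b \<and> (a, b) \<in> sigma_rel S m st pl \<longrightarrow> a = b)"

definition F_restriction ::
  "'a set \<Rightarrow> ('a \<Rightarrow> 'a \<Rightarrow> 'a) \<Rightarrow> ('a \<Rightarrow> 'a) \<Rightarrow> ('a \<Rightarrow> 'a) \<Rightarrow> bool" where
  "F_restriction S m st pl \<longleftrightarrow>
     (\<forall>a\<in>S. \<exists>b. (b, a) \<in> sigma_rel S m st pl \<and>
        (\<forall>c. (c, a) \<in> sigma_rel S m st pl \<longrightarrow> nat_le S m st c b))"

text \<open>Underlying left partial action of S/sigma on P(S): the class of a acts on e
  iff some c in the class of a has e \<le> c*, with value (c e)+.
  (Classes are given by representatives a.)\<close>
definition upa ::
  "'a set \<Rightarrow> ('a \<Rightarrow> 'a \<Rightarrow> 'a) \<Rightarrow> ('a \<Rightarrow> 'a) \<Rightarrow> ('a \<Rightarrow> 'a) \<Rightarrow> 'a \<Rightarrow> 'a \<Rightarrow> 'a option" where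
  "upa S m st pl a e =
     (if \<exists>c. (c, a) \<in> sigma_rel S m st pl \<and> nat_le S m st e (st c)
      then Some (pl (m (SOME c. (c, a) \<in> sigma_rel S m st pl \<and> nat_le S m st e (st c)) e))
      else None)"

definition ultra_F_restriction_monoid ::
  "'a set \<Rightarrow> ('a \<Rightarrow> 'a \<Rightarrow> 'a) \<Rightarrow> ('a \<Rightarrow> 'a) \<Rightarrow> ('a \<Rightarrow> 'a) \<Rightarrow> bool" where
  "ultra_F_restriction_monoid S m st pl \<longleftrightarrow>
     restriction_monoid S m st pl \<and> proper_rs S m st pl \<and> F_restriction S m st pl \<and>
     (\<forall>a\<in>S. \<forall>b\<in>S. \<forall>e\<in>projections S st.
        upa S m st pl (m a b) e \<noteq> None \<longleftrightarrow>
        (\<exists>f. upa S m st pl b e = Some f \<and> upa S m st pl a f \<noteq> None))"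

definition pdom :: "('t \<Rightarrow> 'y \<Rightarrow> 'y option) \<Rightarrow> 't \<Rightarrow> 'y set" where
  "pdom act t = {y. act t y \<noteq> None}"

definition pran :: "('t \<Rightarrow> 'y \<Rightarrow> 'y option) \<Rightarrow> 't \<Rightarrow> 'y set" where
  "pran act t = {z. \<exists>y. act t y = Some z}"

definition order_ideal :: "'y::order set \<Rightarrow> bool" where
  "order_ideal I \<longleftrightarrow> (\<forall>x\<in>I. \<forall>y. y \<le> x \<longrightarrow> y \<in> I)"

definition left_partial_action :: "('t::monoid_mult \<Rightarrow> 'y \<Rightarrow> 'y option) \<Rightarrow> bool" where
  "left_partial_action act \<longleftrightarrow>
     (\<forall>y. act 1 y = Some y) \<and>
     (\<forall>s t y z w. act t y = Some z \<and> act s z = Some w \<longrightarrow> act (s * t) y = Some w)"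

definition axioms_ABC :: "('t \<Rightarrow> 'y::order \<Rightarrow> 'y option) \<Rightarrow> bool" where
  "axioms_ABC act \<longleftrightarrow> (\<forall>t.
     order_ideal (pdom act t) \<and> order_ideal (pran act t) \<and>
     bij_betw (\<lambda>y. the (act t y)) (pdom act t) (pran act t) \<and>
     (\<forall>x\<in>pdom act t. \<forall>y\<in>pdom act t. x \<le> y \<longleftrightarrow> the (act t x) \<le> the (act t y)) \<and>
     pdom act t \<noteq> {})"

definition partially_defined_action :: "('t::monoid_mult \<Rightarrow> 'y \<Rightarrow> 'y option) \<Rightarrow> bool" where
  "partially_defined_action act \<longleftrightarrow>
     (\<forall>s t x. act (s * t) x \<noteq> None \<longleftrightarrow> (\<exists>y. act t x = Some y \<and> act s y \<noteq> None))"

text \<open>Reverse right partial action: y \<circ> t = phi_t^{-1}(y), defined iff y in ran phi_t.\<close>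
definition rcirc :: "('t \<Rightarrow> 'y \<Rightarrow> 'y option) \<Rightarrow> 'y \<Rightarrow> 't \<Rightarrow> 'y" where
  "rcirc act y t = (THE x. act t x = Some y)"

definition M_carrier :: "('t \<Rightarrow> 'y \<Rightarrow> 'y option) \<Rightarrow> ('y \<times> 't) set" where
  "M_carrier act = {(y, t). y \<in> pran act t}"

definition M_mult :: "('t::monoid_mult \<Rightarrow> 'y::semilattice_inf \<Rightarrow> 'y option)
    \<Rightarrow> 'y \<times> 't \<Rightarrow> 'y \<times> 't \<Rightarrow> 'y \<times> 't" where
  "M_mult act p q = (case p of (x, s) \<Rightarrow> case q of (y, t) \<Rightarrow>
     (the (act s (inf (rcirc act x s) y)), s * t))"

definition M_star :: "('t::monoid_mult \<Rightarrow> 'y \<Rightarrow> 'y option) \<Rightarrow> 'y \<times> 't \<Rightarrow> 'y \<times> 't" where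
  "M_star act p = (case p of (y, t) \<Rightarrow> (rcirc act y t, 1))"

definition M_plus :: "'y \<times> 't::monoid_mult \<Rightarrow> 'y \<times> 't" where
  "M_plus p = (case p of (y, t) \<Rightarrow> (y, 1))"

definition sl_id :: "'y::order" where
  "sl_id = (GREATEST y. True)"

definition double_action ::
  "('t::monoid_mult \<Rightarrow> 'y::semilattice_inf \<Rightarrow> 'y) \<Rightarrow> ('y \<Rightarrow> 't \<Rightarrow> 'y) \<Rightarrow> bool" where
  "double_action la ra \<longleftrightarrow>
     (\<forall>x. la 1 x = x) \<and> (\<forall>s t x. la s (la t x) = la (s * t) x) \<and>
     (\<forall>x. ra x 1 = x) \<and> (\<forall>s t x. ra (ra x s) t = ra x (s * t)) \<and>
     (\<forall>t x y. la t (inf x y) = inf (la t x) (la t y)) \<and>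
     (\<forall>t x y. ra (inf x y) t = inf (ra x t) (ra y t)) \<and>
     (\<forall>t x. ra (la t x) t = inf (ra sl_id t) x) \<and>
     (\<forall>t x. la t (ra x t) = inf x (la t sl_id))"

definition Ym_carrier :: "('t \<Rightarrow> 'y::order \<Rightarrow> 'y) \<Rightarrow> ('y \<times> 't) set" where
  "Ym_carrier la = {(y, t). y \<le> la t sl_id}"

definition Ym_mult :: "('t::monoid_mult \<Rightarrow> 'y::semilattice_inf \<Rightarrow> 'y)
    \<Rightarrow> 'y \<times> 't \<Rightarrow> 'y \<times> 't \<Rightarrow> 'y \<times> 't" where
  "Ym_mult la p q = (case p of (x, s) \<Rightarrow> case q of (y, t) \<Rightarrow> (inf x (la s y), s * t))"

definition Ym_star :: "('y \<Rightarrow> 't::monoid_mult \<Rightarrow> 'y) \<Rightarrow> 'y \<times> 't \<Rightarrow> 'y \<times> 't" where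
  "Ym_star ra p = (case p of (y, t) \<Rightarrow> (ra y t, 1))"

definition Ym_plus :: "'y \<times> 't::monoid_mult \<Rightarrow> 'y \<times> 't" where
  "Ym_plus p = (case p of (y, t) \<Rightarrow> (y, 1))"

definition Ym_one :: "'y::order \<times> 't::monoid_mult" where
  "Ym_one = (sl_id, 1)"

end

theory Submission
  imports Defs
begin

locale pa0 =
  fixes act :: "'t::monoid_mult \<Rightarrow> 'y::semilattice_inf \<Rightarrow> 'y option"
  assumes lpa: "left_partial_action act" and abc: "axioms_ABC act"
    and pda: "partially_defined_action act"
begin

lemma abc_t: "order_ideal (pdom act t) \<and> order_ideal (pran act t) \<and>
     bij_betw (\<lambda>y. the (act t y)) (pdom act t) (pran act t) \<and>
     (\<forall>x\<in>pdom act t. \<forall>y\<in>pdom act t. x \<le> y \<longleftrightarrow> the (act t x) \<le> the (act t y)) \<and>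
     pdom act t \<noteq> {}"
  using abc unfolding axioms_ABC_def by (rule spec)

lemma dom_ideal: "x \<in> pdom act t \<Longrightarrow> y \<le> x \<Longrightarrow> y \<in> pdom act t"
  using abc_t[of t] unfolding order_ideal_def by blast
lemma ran_ideal: "x \<in> pran act t \<Longrightarrow> y \<le> x \<Longrightarrow> y \<in> pran act t"
  using abc_t[of t] unfolding order_ideal_def by blast
lemma inj: "x \<in> pdom act t \<Longrightarrow> y \<in> pdom act t \<Longrightarrow> the (act t x) = the (act t y) \<Longrightarrow> x = y"
proof -
  assume a: "x \<in> pdom act t" "y \<in> pdom act t" "the (act t x) = the (act t y)"
  have "inj_on (\<lambda>y. the (act t y)) (pdom act t)" using abc_t[of t] bij_betw_imp_inj_on by blast
  then show "x = y" using a by (metis inj_onD)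
qed
lemma mono_iff: "x \<in> pdom act t \<Longrightarrow> y \<in> pdom act t \<Longrightarrow> x \<le> y \<longleftrightarrow> the (act t x) \<le> the (act t y)"
  using abc_t[of t] by blast
lemma dom_Some: "x \<in> pdom act t \<Longrightarrow> act t x = Some (the (act t x))"
  by (auto simp: pdom_def)
lemma Some_dom: "act t x = Some z \<Longrightarrow> x \<in> pdom act t"
  by (auto simp: pdom_def)
lemma Some_ran: "act t x = Some z \<Longrightarrow> z \<in> pran act t"
  by (auto simp: pran_def)
lemma dom_ran: "x \<in> pdom act t \<Longrightarrow> the (act t x) \<in> pran act t"
  by (auto simp: pdom_def pran_def)
lemma act1: "act 1 y = Some y"
  using lpa by (auto simp: left_partial_action_def)
lemma comp: "act t y = Some z \<Longrightarrow> act s z = Some w \<Longrightarrow> act (s*t) y = Some w"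
  using lpa unfolding left_partial_action_def by blast
lemma pda': "act (s*t) x \<noteq> None \<longleftrightarrow> (\<exists>y. act t x = Some y \<and> act s y \<noteq> None)"
  using pda unfolding partially_defined_action_def by blast
lemma dom_nonempty: "pdom act t \<noteq> {}"
  using abc_t[of t] by blast

lemma rcirc_eq: "act t x = Some z \<Longrightarrow> rcirc act z t = x"
  unfolding rcirc_def
proof (rule the_equality)
  fix x' assume a: "act t x = Some z" and b: "act t x' = Some z"
  show "x' = x" using inj[OF Some_dom[OF b] Some_dom[OF a]] a b by simp
qed

lemma rcirc: "z \<in> pran act t \<Longrightarrow> act t (rcirc act z t) = Some z"
proof -
  assume "z \<in> pran act t"
  then obtain x where "act t x = Some z" by (auto simp: pran_def)
  then show ?thesis using rcirc_eq by simp
qed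

lemma rcirc1: "rcirc act y 1 = y"
  using rcirc_eq[OF act1] .

lemma meet:
  assumes x: "x \<in> pdom act t" and y: "y \<in> pdom act t"
  shows "the (act t (inf x y)) = inf (the (act t x)) (the (act t y))"
proof -
  have xy: "inf x y \<in> pdom act t" using dom_ideal[OF x] by simp
  have c1: "the (act t (inf x y)) \<le> the (act t x)" using mono_iff[OF xy x] by simp
  have c2: "the (act t (inf x y)) \<le> the (act t y)" using mono_iff[OF xy y] by simp
  have "inf (the (act t x)) (the (act t y)) \<in> pran act t"
    using ran_ideal[OF dom_ran[OF x]] by simp
  then obtain w where w: "act t w = Some (inf (the (act t x)) (the (act t y)))"
    by (auto simp: pran_def)
  have wd: "w \<in> pdom act t" using Some_dom[OF w] .
  have "w \<le> x" using mono_iff[OF wd x] w by simp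
  moreover have "w \<le> y" using mono_iff[OF wd y] w by simp
  ultimately have "w \<le> inf x y" by simp
  then have "inf (the (act t x)) (the (act t y)) \<le> the (act t (inf x y))"
    using mono_iff[OF wd xy] w by simp
  with c1 c2 show ?thesis by (simp add: antisym)
qed

end

locale pa = pa0 act for act :: "'t::monoid_mult \<Rightarrow> 'y::semilattice_inf \<Rightarrow> 'y option" +
  fixes d :: "'t \<Rightarrow> 'y" and r :: "'t \<Rightarrow> 'y" and la :: "'t \<Rightarrow> 'y \<Rightarrow> 'y" and ra :: "'y \<Rightarrow> 't \<Rightarrow> 'y"
  assumes top: "\<forall>y::'y. y \<le> sl_id"
    and rex: "\<forall>t. \<exists>m\<in>pran act t. \<forall>z\<in>pran act t. z \<le> m"
    and d_def: "d = (\<lambda>t. GREATEST y. y \<in> pdom act t)"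
    and r_def: "r = (\<lambda>t. GREATEST y. y \<in> pran act t)"
    and la_def: "la = (\<lambda>t y. the (act t (inf y (d t))))"
    and ra_def: "ra = (\<lambda>y t. rcirc act (inf y (r t)) t)"
begin

lemma r_prop: "r t \<in> pran act t \<and> (\<forall>z\<in>pran act t. z \<le> r t)"
proof -
  obtain m where m: "m \<in> pran act t" "\<forall>z\<in>pran act t. z \<le> m" using rex by blast
  have "(GREATEST y. y \<in> pran act t) = m" by (rule Greatest_equality) (use m in auto)
  then show ?thesis using m r_def by simp
qed

lemma ran_iff: "z \<in> pran act t \<longleftrightarrow> z \<le> r t"
  using r_prop ran_ideal by blast

lemma d_prop: "act t (d t) = Some (r t) \<and> (\<forall>x\<in>pdom act t. x \<le> d t)"
proof -
  define x0 where "x0 = rcirc act (r t) t"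
  have a: "act t x0 = Some (r t)" using rcirc r_prop x0_def by blast
  have x0d: "x0 \<in> pdom act t" using Some_dom[OF a] .
  have m: "\<forall>x\<in>pdom act t. x \<le> x0"
  proof
    fix x assume x: "x \<in> pdom act t"
    have "the (act t x) \<le> r t" using r_prop dom_ran[OF x] by blast
    then show "x \<le> x0" using mono_iff[OF x x0d] a by simp
  qed
  have "(GREATEST y. y \<in> pdom act t) = x0" by (rule Greatest_equality) (use m x0d in auto)
  then show ?thesis using a m d_def by simp
qed

lemma dom_iff: "x \<in> pdom act t \<longleftrightarrow> x \<le> d t"
  using d_prop dom_ideal Some_dom by blast

lemma la_act: "act t (inf x (d t)) = Some (la t x)"
  using dom_Some dom_iff la_def by simp

lemma ra_act: "act t (ra x t) = Some (inf x (r t))"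
  using rcirc ran_iff ra_def by simp

lemma inf_sl[simp]: "inf (y::'y) sl_id = y" "inf sl_id y = y"
  using top by (simp_all add: inf_absorb1 inf_absorb2)

lemma la_top: "la t sl_id = r t"
  using la_act[of t sl_id] d_prop by simp

lemma ra_top: "ra sl_id t = d t"
  using ra_def rcirc_eq d_prop by simp

lemma double: "double_action la ra"
  unfolding double_action_def
proof (intro conjI allI)
  fix x
  have "x \<le> d 1" using dom_iff Some_dom[OF act1] by blast
  then show "la 1 x = x" using la_act[of 1 x] act1 by (simp add: inf_absorb1)
next
  fix x
  have "x \<le> r 1" using ran_iff Some_ran[OF act1] by blast
  then show "ra x 1 = x" using ra_def rcirc1 by (simp add: inf_absorb1)
next
  fix s t x
  define u where "u = inf x (d t)"
  define z where "z = la t x"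
  have uz: "act t u = Some z" using la_act u_def z_def by simp
  have zr: "z \<in> pran act t" using Some_ran[OF uz] .
  have "inf z (d s) \<in> pran act t" using ran_ideal[OF zr] by simp
  then obtain v where v: "act t v = Some (inf z (d s))" by (auto simp: pran_def)
  have w: "act s (inf z (d s)) = Some (la s z)" using la_act .
  have vst: "act (s*t) v = Some (la s z)" using comp[OF v w] .
  have vd: "v \<in> pdom act t" using Some_dom[OF v] .
  have ud: "u \<in> pdom act t" using Some_dom[OF uz] .
  have "v \<le> d (s*t)" using dom_iff Some_dom[OF vst] by blast
  moreover have "v \<le> u" using mono_iff[OF vd ud] v uz by simp
  ultimately have le1: "v \<le> inf x (d (s*t))" using u_def by simp
  define w' where "w' = inf x (d (s*t))"
  have w'd: "w' \<in> pdom act (s*t)" using dom_iff w'_def by simp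
  then obtain y' where y': "act t w' = Some y'" "act s y' \<noteq> None"
    using pda' by (auto simp: pdom_def)
  have y'd: "y' \<le> d s" using dom_iff y'(2) by (auto simp: pdom_def)
  have w'dt: "w' \<in> pdom act t" using Some_dom[OF y'(1)] .
  have "w' \<le> u" using w'dt dom_iff u_def w'_def by simp
  then have "y' \<le> z" using mono_iff[OF w'dt ud] y'(1) uz by simp
  then have "y' \<le> inf z (d s)" using y'd by simp
  then have "w' \<le> v" using mono_iff[OF w'dt vd] y'(1) v by simp
  then have "v = w'" using le1 w'_def by (simp add: antisym)
  then show "la s (la t x) = la (s * t) x"
    using vst la_def z_def w'_def by simp
next
  fix s t x
  define a where "a = ra x s"
  have a: "act s a = Some (inf x (r s))" using ra_act a_def by simp
  have ad: "a \<in> pdom act s" using Some_dom[OF a] .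
  define b where "b = ra a t"
  have b: "act t b = Some (inf a (r t))" using ra_act b_def by simp
  have "inf a (r t) \<in> pdom act s" using dom_ideal[OF ad] by simp
  then obtain e where e: "act s (inf a (r t)) = Some e" by (auto simp: pdom_def)
  have bst: "act (s*t) b = Some e" using comp[OF b e] .
  have "e \<le> inf x (r s)" using mono_iff[OF Some_dom[OF e] ad] e a by simp
  then have "e \<le> x" by simp
  moreover have "e \<le> r (s*t)" using ran_iff Some_ran[OF bst] by blast
  ultimately have el: "e \<le> inf x (r (s*t))" by simp
  define c where "c = ra x (s*t)"
  have c: "act (s*t) c = Some (inf x (r (s*t)))" using ra_act c_def by simp
  have bc: "b \<le> c" using mono_iff[OF Some_dom[OF bst] Some_dom[OF c]] bst c el by simp
  obtain e' where e': "act t c = Some e'" "act s e' \<noteq> None"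
    using pda' c by blast
  obtain g where g: "act s e' = Some g" using e'(2) by auto
  have gg: "g = inf x (r (s*t))" using comp[OF e'(1) g] c by simp
  have "g \<le> r s" using ran_iff Some_ran[OF g] by blast
  then have "g \<le> inf x (r s)" using gg by simp
  then have "e' \<le> a" using mono_iff[OF Some_dom[OF g] ad] g a by simp
  moreover have "e' \<le> r t" using ran_iff Some_ran[OF e'(1)] by blast
  ultimately have "e' \<le> inf a (r t)" by simp
  then have "c \<le> b" using mono_iff[OF Some_dom[OF e'(1)] Some_dom[OF b]] e'(1) b by simp
  then show "ra (ra x s) t = ra x (s * t)" using bc a_def b_def c_def by (simp add: antisym)
next
  fix t x y
  have 1: "inf x (d t) \<in> pdom act t" "inf y (d t) \<in> pdom act t" using dom_iff by simp_all
  have "inf (inf x y) (d t) = inf (inf x (d t)) (inf y (d t))" by (simp add: inf_aci)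
  then show "la t (inf x y) = inf (la t x) (la t y)"
    using meet[OF 1] la_def by simp
next
  fix t x y
  have a: "act t (ra x t) = Some (inf x (r t))" "act t (ra y t) = Some (inf y (r t))"
    using ra_act by simp_all
  have "the (act t (inf (ra x t) (ra y t))) = inf (inf x (r t)) (inf y (r t))"
    using meet[OF Some_dom[OF a(1)] Some_dom[OF a(2)]] a by simp
  also have "\<dots> = inf (inf x y) (r t)" by (simp add: inf_aci)
  finally have "act t (inf (ra x t) (ra y t)) = Some (inf (inf x y) (r t))"
    using dom_Some dom_ideal[OF Some_dom[OF a(1)]] by (metis inf_le1)
  then show "ra (inf x y) t = inf (ra x t) (ra y t)"
    using rcirc_eq ra_def by simp
next
  fix t x
  have l: "act t (inf x (d t)) = Some (la t x)" using la_act .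
  have "la t x \<le> r t" using ran_iff Some_ran[OF l] by blast
  then have "ra (la t x) t = inf x (d t)" using ra_def rcirc_eq[OF l] by (simp add: inf_absorb1)
  then show "ra (la t x) t = inf (ra sl_id t) x" using ra_top by (simp add: inf_commute)
next
  fix t x
  have a: "act t (ra x t) = Some (inf x (r t))" using ra_act .
  have "ra x t \<le> d t" using dom_iff Some_dom[OF a] by blast
  then have "la t (ra x t) = inf x (r t)" using la_def a by (simp add: inf_absorb1)
  then show "la t (ra x t) = inf x (la t sl_id)" using la_top by simp
qed

end

context pa
begin

lemma final:
  "Ym_carrier la = M_carrier act
    \<and> (\<forall>p\<in>M_carrier act. \<forall>q\<in>M_carrier act. M_mult act p q = Ym_mult la p q)
    \<and> (\<forall>p\<in>M_carrier act. M_star act p = Ym_star ra p)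
    \<and> (\<forall>p\<in>M_carrier act. M_plus p = Ym_plus p)
    \<and> Ym_one \<in> M_carrier act
    \<and> (\<forall>p\<in>M_carrier act. M_mult act Ym_one p = p \<and> M_mult act p Ym_one = p)"
proof (intro conjI ballI)
  show "Ym_carrier la = M_carrier act"
    unfolding Ym_carrier_def M_carrier_def using la_top ran_iff by auto
next
  fix p q assume p: "p \<in> M_carrier act" and q: "q \<in> M_carrier act"
  obtain x s where ps: "p = (x, s)" by (cases p)
  obtain y t where qs: "q = (y, t)" by (cases q)
  have xr: "x \<in> pran act s" using p ps by (simp add: M_carrier_def)
  have a: "act s (rcirc act x s) = Some x" using rcirc[OF xr] .
  have ad: "rcirc act x s \<in> pdom act s" using Some_dom[OF a] .
  have "rcirc act x s \<le> d s" using ad dom_iff by blast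
  then have e: "inf (rcirc act x s) y = inf (rcirc act x s) (inf y (d s))"
    by (metis inf.absorb_iff2 inf_assoc inf_commute)
  have yd: "inf y (d s) \<in> pdom act s" using dom_iff by simp
  have "the (act s (inf (rcirc act x s) y)) = inf x (la s y)"
    using e meet[OF ad yd] a la_def by simp
  then show "M_mult act p q = Ym_mult la p q"
    using ps qs by (simp add: M_mult_def Ym_mult_def)
next
  fix p assume p: "p \<in> M_carrier act"
  obtain y t where ps: "p = (y, t)" by (cases p)
  have "y \<le> r t" using p ps ran_iff by (simp add: M_carrier_def)
  then show "M_star act p = Ym_star ra p"
    using ps by (simp add: M_star_def Ym_star_def ra_def inf_absorb1)
next
  fix p :: "'y \<times> 't"
  show "M_plus p = Ym_plus p" by (simp add: M_plus_def Ym_plus_def split: prod.splits)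
next
  show "Ym_one \<in> M_carrier act"
    using Some_ran[OF act1] by (simp add: Ym_one_def M_carrier_def)
next
  fix p assume p: "p \<in> M_carrier act"
  obtain y t where ps: "p = (y, t)" by (cases p)
  show "M_mult act Ym_one p = p"
    using ps by (simp add: M_mult_def Ym_one_def rcirc1 act1)
next
  fix p assume p: "p \<in> M_carrier act"
  obtain x s where ps: "p = (x, s)" by (cases p)
  have xr: "x \<in> pran act s" using p ps by (simp add: M_carrier_def)
  show "M_mult act p Ym_one = p"
    using ps rcirc[OF xr] by (simp add: M_mult_def Ym_one_def)
qed

end

context pa0
begin

lemma S_mult: "M_mult act (x, s) (y, t) = (the (act s (inf (rcirc act x s) y)), s * t)"
  by (simp add: M_mult_def)

lemma one_in: "(y, 1) \<in> M_carrier act"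
  using Some_ran[OF act1] by (simp add: M_carrier_def)

lemma top_ex:
  assumes "restriction_monoid (M_carrier act) (M_mult act) (M_star act) M_plus"
  shows "\<forall>y::'y. y \<le> sl_id"
proof -
  obtain u where u: "u \<in> M_carrier act"
    "\<forall>x\<in>M_carrier act. M_mult act u x = x \<and> M_mult act x u = x"
    using assms unfolding restriction_monoid_def by blast
  obtain e t0 where us: "u = (e, t0)" by (cases u)
  have "M_mult act u (e, 1) = (e, 1)" using u(2) one_in by blast
  then have t0: "t0 = 1" using us by (simp add: S_mult)
  have le: "y \<le> e" for y
  proof -
    have "M_mult act u (y, 1) = (y, 1)" using u(2) one_in by blast
    then have "the (act 1 (inf e y)) = y" using us t0 by (simp add: S_mult rcirc1)
    then have "inf e y = y" by (simp add: act1)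
    then show ?thesis by (metis inf.cobounded1)
  qed
  have "sl_id = e" unfolding sl_id_def by (rule Greatest_equality) (use le in auto)
  then show ?thesis using le by simp
qed

lemma sigma_sub:
  assumes rs: "restriction_semigroup (M_carrier act) (M_mult act) (M_star act) M_plus"
  shows "sigma_rel (M_carrier act) (M_mult act) (M_star act) M_plus
     \<subseteq> {(p, q). p \<in> M_carrier act \<and> q \<in> M_carrier act \<and> snd p = snd q}"
proof -
  let ?S = "M_carrier act"
  let ?R = "{(p, q). p \<in> ?S \<and> q \<in> ?S \<and> snd p = snd q}"
  have cm: "\<forall>x\<in>?S. \<forall>y\<in>?S. M_mult act x y \<in> ?S"
    using rs unfolding restriction_semigroup_def by (elim conjE)
  have cs: "\<forall>x\<in>?S. M_star act x \<in> ?S \<and> M_plus x \<in> ?S"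
    using rs unfolding restriction_semigroup_def by (elim conjE)
  have sndm: "snd (M_mult act x y) = snd x * snd y" for x y
    by (simp add: M_mult_def split: prod.splits)
  have snds: "snd (M_star act x) = 1" "snd (M_plus x) = 1" for x
    by (simp_all add: M_star_def M_plus_def split: prod.splits)
  have "equiv ?S ?R" by (rule equivI) (auto simp: refl_on_def sym_def trans_def)
  moreover have "\<forall>a b c. (a, b) \<in> ?R \<and> c \<in> ?S \<longrightarrow> (M_mult act c a, M_mult act c b) \<in> ?R \<and> (M_mult act a c, M_mult act b c) \<in> ?R"
    using cm sndm by auto
  moreover have "\<forall>a b. (a, b) \<in> ?R \<longrightarrow> (M_star act a, M_star act b) \<in> ?R \<and> (M_plus a, M_plus b) \<in> ?R"
    using cs snds by auto
  moreover have "projections ?S (M_star act) \<times> projections ?S (M_star act) \<subseteq> ?R"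
    using cs snds unfolding projections_def by auto
  ultimately show ?thesis unfolding sigma_rel_def by blast
qed

lemma proj_in: "(y, 1) \<in> projections (M_carrier act) (M_star act)"
proof -
  have "M_star act (y, 1) = (y, 1)" by (simp add: M_star_def rcirc1)
  then show ?thesis unfolding projections_def using one_in by (metis image_eqI)
qed

lemma sigma_same:
  assumes "(y, t) \<in> M_carrier act" "(z, t) \<in> M_carrier act"
  shows "((y, t), (z, t)) \<in> sigma_rel (M_carrier act) (M_mult act) (M_star act) M_plus"
  unfolding sigma_rel_def
proof (rule InterI, safe)
  fix R assume eq: "equiv (M_carrier act) R"
    and cl: "\<forall>a b c. (a, b) \<in> R \<and> c \<in> M_carrier act \<longrightarrow> (M_mult act c a, M_mult act c b) \<in> R \<and> (M_mult act a c, M_mult act b c) \<in> R"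
    and pr: "projections (M_carrier act) (M_star act) \<times> projections (M_carrier act) (M_star act) \<subseteq> R"
  have m: "M_mult act (w, 1) (v, t) = (inf w v, t)" for w v
    by (simp add: S_mult rcirc1 act1)
  have "((y, 1), (inf y z, 1)) \<in> R" using pr proj_in by blast
  then have "(M_mult act (y, 1) (y, t), M_mult act (inf y z, 1) (y, t)) \<in> R" using cl assms by blast
  then have 1: "((y, t), (inf y z, t)) \<in> R" using m by (simp add: inf_commute)
  have "((z, 1), (inf y z, 1)) \<in> R" using pr proj_in by blast
  then have "(M_mult act (z, 1) (z, t), M_mult act (inf y z, 1) (z, t)) \<in> R" using cl assms by blast
  then have 2: "((z, t), (inf y z, t)) \<in> R" using m by (simp add: inf_commute inf_left_commute)
  show "((y, t), (z, t)) \<in> R" using 1 2 eq by (meson equivE symE transE)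
qed

lemma rex:
  assumes u: "ultra_F_restriction_monoid (M_carrier act) (M_mult act) (M_star act) M_plus"
  shows "\<forall>t. \<exists>m\<in>pran act t. \<forall>z\<in>pran act t. z \<le> m"
proof
  fix t
  let ?S = "M_carrier act"
  let ?sig = "sigma_rel (M_carrier act) (M_mult act) (M_star act) M_plus"
  have rs: "restriction_semigroup (M_carrier act) (M_mult act) (M_star act) M_plus"
    using u unfolding ultra_F_restriction_monoid_def restriction_monoid_def by blast
  have F: "F_restriction (M_carrier act) (M_mult act) (M_star act) M_plus"
    using u unfolding ultra_F_restriction_monoid_def by blast
  obtain x where "x \<in> pdom act t" using dom_nonempty by blast
  then have "act t x = Some (the (act t x))" by (rule dom_Some)
  then have z: "(the (act t x), t) \<in> ?S" using Some_ran by (simp add: M_carrier_def)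
  then obtain b where b: "(b, (the (act t x), t)) \<in> ?sig"
    "\<forall>c. (c, (the (act t x), t)) \<in> ?sig \<longrightarrow> nat_le ?S (M_mult act) (M_star act) c b"
    using F unfolding F_restriction_def by blast
  obtain m t' where bs: "b = (m, t')" by (cases b)
  have "(b, (the (act t x), t)) \<in> {(p, q). p \<in> ?S \<and> q \<in> ?S \<and> snd p = snd q}"
    using b(1) sigma_sub[OF rs] by blast
  then have mt: "t' = t" "(m, t) \<in> ?S" using bs by auto
  show "\<exists>m\<in>pran act t. \<forall>z\<in>pran act t. z \<le> m"
  proof (intro bexI ballI)
    show "m \<in> pran act t" using mt by (simp add: M_carrier_def)
  next
    fix z' assume z': "z' \<in> pran act t"
    then have "(z', t) \<in> ?S" by (simp add: M_carrier_def)
    then have "((z', t), (the (act t x), t)) \<in> ?sig" using sigma_same z by blast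
    then have "nat_le ?S (M_mult act) (M_star act) (z', t) b" using b(2) by blast
    then obtain e where e: "e \<in> projections ?S (M_star act)" "(z', t) = M_mult act e b"
      unfolding nat_le_def by blast
    obtain p where p: "p \<in> ?S" "e = M_star act p" using e(1) unfolding projections_def by blast
    obtain y s where ps: "p = (y, s)" by (cases p)
    have "(z', t) = (inf (rcirc act y s) m, t)"
      using e(2) p(2) ps bs mt by (simp add: M_star_def S_mult rcirc1 act1)
    then show "z' \<le> m" by (metis inf.cobounded2 prod.inject)
  qed
qed

end

theorem proposition3p13:
  fixes act :: "'t::monoid_mult \<Rightarrow> 'y::semilattice_inf \<Rightarrow> 'y option"
  assumes "left_partial_action act"
    and "axioms_ABC act"
    and "partially_defined_action act"
    and "ultra_F_restriction_monoid (M_carrier act) (M_mult act) (M_star act) M_plus"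
  defines "d \<equiv> (\<lambda>t. GREATEST y. y \<in> pdom act t)"
    and "r \<equiv> (\<lambda>t. GREATEST y. y \<in> pran act t)"
  defines "la \<equiv> (\<lambda>t y. the (act t (inf y (d t))))"
    and "ra \<equiv> (\<lambda>y t. rcirc act (inf y (r t)) t)"
  shows "double_action la ra
    \<and> Ym_carrier la = M_carrier act
    \<and> (\<forall>p\<in>M_carrier act. \<forall>q\<in>M_carrier act. M_mult act p q = Ym_mult la p q)
    \<and> (\<forall>p\<in>M_carrier act. M_star act p = Ym_star ra p)
    \<and> (\<forall>p\<in>M_carrier act. M_plus p = Ym_plus p)
    \<and> Ym_one \<in> M_carrier act
    \<and> (\<forall>p\<in>M_carrier act. M_mult act Ym_one p = p \<and> M_mult act p Ym_one = p)"
proof -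
  interpret p0: pa0 act using assms(1-3) by unfold_locales
  have rm: "restriction_monoid (M_carrier act) (M_mult act) (M_star act) M_plus"
    using assms(4) unfolding ultra_F_restriction_monoid_def by blast
  interpret p: pa act d r la ra
    using assms(1-3) p0.top_ex[OF rm] p0.rex[OF assms(4)]
    by unfold_locales (simp_all add: d_def r_def la_def ra_def)
  show ?thesis using p.double p.final by blast
qed

end
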